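(* Let $N,n,m,p$ be positive integers, $A\in\mathbb{R}^{n\times n}$, $B\in\mathbb{R}^{n\times p}$, $C\in\mathbb{R}^{m\times n}$, $H\in\mathbb{R}^{n\times m}$, $W=[w_{ij}]\in\mathbb{R}^{N\times N}$ with $w_{ii}=0$ for all $i$, $\Delta=\mathrm{diag}(\delta_1,\dots,\delta_N)$ with $\delta_i\in\{0,1\}$, and $h>0$. Put $\mathcal{B}(h)=\int_0^h e^{A\tau}d\tau\,B$, $\mathcal{H}(h)=\int_0^h e^{A\tau}d\tau\,HC$, $\Phi_s=I_N\otimes e^{Ah}+W\otimes\mathcal{H}(h)$, $\Psi_s=\Delta\otimes\mathcal{B}(h)$. Assume $W$ is diagonalizable, and let $v_1,\dots,v_N\in\mathbb{C}^{1\times N}$ be linearly independent row vectors with $v_kW=\lambda_kv_k$ ($\lambda_1,\dots,\lambda_N$ the eigenvalues of $W$ listed with multiplicity). For $k=1,\dots,N$ let $E_k=e^{Ah}+\lambda_k\mathcal{H}(h)$. Suppose that: (1) the pair $(W,\Delta)$ is controllable; (2) the pair $(E_k,\mathcal{B}(h))$ is controllable for every $k=1,\dots,N$; (3) whenever $\theta\in\mathbb{C}$ is a common eigenvalue of $E_{k_1},\dots,E_{k_q}$ for distinct indices $k_1,\dots,k_q\in\{1,\dots,N\}$ with $1<q\le N$, then $(v_{k_1}\otimes\xi_{k_1}+\dots+v_{k_q}\otimes\xi_{k_q})(\Delta\otimes\mathcal{B}(h))\neq0$ for all $\xi_j\in M(\theta\,|\,E_j)$, $j=k_1,\dots,k_q$,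 with $(\xi_{k_1},\dots,\xi_{k_q})\neq0$. Then the networked sampled-data system $X(k+1)=\Phi_sX(k)+\Psi_sU(k)$ is controllable.
   Context: The networked sampled-data system is the discrete-time system $X(k+1)=\Phi_sX(k)+\Psi_sU(k)$, $X(k)\in\mathbb{R}^{Nn}$, $U(k)\in\mathbb{R}^{Np}$; it is called controllable if every initial state can be steered to the origin in finitely many steps. For $F\in\mathbb{C}^{q\times q}$ and $G\in\mathbb{C}^{q\times s}$, the pair $(F,G)$ is called controllable if $\mathrm{rank}[sI_q-F,\ G]=q$ for every $s\in\mathbb{C}$. For a square matrix $E$ and $\theta\in\mathbb{C}$, $M(\theta\,|\,E)=\{\xi \text{ row vector}:\ \xi E=\theta\xi\}$ is the left eigenspace of $E$ for $\theta$ (including $0$). $\otimes$ is the Kronecker product. *)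

theory Defs
  imports "HOL-Analysis.Analysis" "Jordan_Normal_Form.DL_Rank" "Jordan_Normal_Form.Char_Poly"
begin

definition exp_mat :: "real mat \<Rightarrow> real mat" where
  "exp_mat M = mat (dim_row M) (dim_col M) (\<lambda>(i,j). \<Sum>k. (M ^\<^sub>m k) $$ (i,j) / fact k)"

definition int_exp_mat :: "real mat \<Rightarrow> real \<Rightarrow> real mat" where
  "int_exp_mat M h = mat (dim_row M) (dim_col M)
     (\<lambda>(i,j). integral {0..h} (\<lambda>\<tau>. exp_mat (\<tau> \<cdot>\<^sub>m M) $$ (i,j)))"

definition kron :: "'a :: times mat \<Rightarrow> 'a mat \<Rightarrow> 'a mat" where
  "kron P Q = mat (dim_row P * dim_row Q) (dim_col P * dim_col Q)
     (\<lambda>(i,j). P $$ (i div dim_row Q, j div dim_col Q) * Q $$ (i mod dim_row Q, j mod dim_col Q))"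

(* Kronecker product of row vectors (row vectors are represented as vectors) *)
definition kron_vec :: "'a :: times vec \<Rightarrow> 'a vec \<Rightarrow> 'a vec" where
  "kron_vec x y = Matrix.vec (dim_vec x * dim_vec y) (\<lambda>i. x $ (i div dim_vec y) * y $ (i mod dim_vec y))"

definition row_mult :: "'a :: semiring_0 vec \<Rightarrow> 'a mat \<Rightarrow> 'a vec" where
  "row_mult x M = Matrix.vec (dim_col M) (\<lambda>j. x \<bullet> col M j)"

(* horizontal concatenation [F, G] *)
definition hcat :: "'a :: zero mat \<Rightarrow> 'a mat \<Rightarrow> 'a mat" where
  "hcat F G = four_block_mat F G (0\<^sub>m 0 (dim_col F)) (0\<^sub>m 0 (dim_col G))"

definition ctrb_pair :: "complex mat \<Rightarrow> complex mat \<Rightarrow> bool" where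
  "ctrb_pair F G = (\<forall>s::complex.
     vec_space.rank (dim_row F) (hcat (s \<cdot>\<^sub>m 1\<^sub>m (dim_row F) - F) G) = dim_row F)"

(* left eigenspace M(\<theta> | E), including 0 *)
definition left_eigenspace :: "complex \<Rightarrow> complex mat \<Rightarrow> complex vec set" where
  "left_eigenspace \<theta> E = {\<xi> \<in> carrier_vec (dim_row E). row_mult \<xi> E = \<theta> \<cdot>\<^sub>v \<xi>}"

fun traj :: "real mat \<Rightarrow> real mat \<Rightarrow> real vec \<Rightarrow> (nat \<Rightarrow> real vec) \<Rightarrow> nat \<Rightarrow> real vec" where
  "traj \<Phi> \<Psi> X0 U 0 = X0"
| "traj \<Phi> \<Psi> X0 U (Suc k) = \<Phi> *\<^sub>v traj \<Phi> \<Psi> X0 U k + \<Psi> *\<^sub>v U k"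

definition ds_controllable :: "real mat \<Rightarrow> real mat \<Rightarrow> bool" where
  "ds_controllable \<Phi> \<Psi> = (\<forall>X0 \<in> carrier_vec (dim_row \<Phi>). \<exists>K (U :: nat \<Rightarrow> real vec).
     (\<forall>k. U k \<in> carrier_vec (dim_col \<Psi>)) \<and> traj \<Phi> \<Psi> X0 U K = 0\<^sub>v (dim_row \<Phi>))"

abbreviation cmat :: "real mat \<Rightarrow> complex mat" where
  "cmat M \<equiv> map_mat complex_of_real M"

end

theory Submission imports Defs begin
no_notation vec_nth (infixl "$" 90)
no_notation inner (infix "\<bullet>" 70)

fun itv :: "'a :: semiring_0 mat \<Rightarrow> 'a vec \<Rightarrow> nat \<Rightarrow> 'a vec" where
  "itv A v 0 = v"
| "itv A v (Suc j) = A *\<^sub>v itv A v j"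

lemma itv_carrier: "A \<in> carrier_mat M M \<Longrightarrow> v \<in> carrier_vec M \<Longrightarrow> itv A v j \<in> carrier_vec M"
  by (induct j) auto

lemma vec_minus_eq0:
  fixes a b :: "'a :: ab_group_add vec"
  assumes "a \<in> carrier_vec n" "b \<in> carrier_vec n" "a - b = 0\<^sub>v n"
  shows "a = b"
proof (rule eq_vecI)
  fix i assume i: "i < dim_vec b"
  have "(a - b) $ i = 0\<^sub>v n $ i" using assms(3) by simp
  thus "a $ i = b $ i" using i assms(1,2) by simp
qed (use assms in auto)

lemma mult_vec_sum:
  fixes A :: "'a :: comm_ring_1 mat"
  assumes A: "A \<in> carrier_mat K M" and s: "s < K" and I: "finite I"
    and w: "\<And>i. i \<in> I \<Longrightarrow> w i \<in> carrier_vec M"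
  shows "(A *\<^sub>v vec M (\<lambda>t. \<Sum>i\<in>I. a i * w i $ t)) $ s = (\<Sum>i\<in>I. a i * (A *\<^sub>v w i) $ s)"
proof -
  have "(A *\<^sub>v vec M (\<lambda>t. \<Sum>i\<in>I. a i * w i $ t)) $ s
      = (\<Sum>t<M. A $$ (s,t) * (\<Sum>i\<in>I. a i * w i $ t))"
    using A s by (simp add: scalar_prod_def lessThan_atLeast0)
  also have "\<dots> = (\<Sum>t<M. \<Sum>i\<in>I. a i * (A $$ (s,t) * w i $ t))"
    by (simp add: sum_distrib_left algebra_simps)
  also have "\<dots> = (\<Sum>i\<in>I. \<Sum>t<M. a i * (A $$ (s,t) * w i $ t))"
    by (rule sum.swap)
  also have "\<dots> = (\<Sum>i\<in>I. a i * (A *\<^sub>v w i) $ s)"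
  proof (rule sum.cong[OF refl])
    fix i assume "i \<in> I"
    hence "dim_vec (w i) = M" using w by auto
    thus "(\<Sum>t<M. a i * (A $$ (s,t) * w i $ t)) = a i * (A *\<^sub>v w i) $ s"
      using A s by (simp add: scalar_prod_def lessThan_atLeast0 sum_distrib_left)
  qed
  finally show ?thesis .
qed

lemma eig_exists:
  fixes F P :: "complex mat"
  assumes F: "F \<in> carrier_mat M M" and P: "P \<in> carrier_mat Q M"
    and y: "y \<in> carrier_vec M" "y \<noteq> 0\<^sub>v M"
    and ann: "\<And>j. j < M \<Longrightarrow> P *\<^sub>v itv F y j = 0\<^sub>v Q"
  shows "\<exists>z \<theta>. z \<in> carrier_vec M \<and> z \<noteq> 0\<^sub>v M \<and> F *\<^sub>v z = \<theta> \<cdot>\<^sub>v z \<and> P *\<^sub>v z = 0\<^sub>v Q"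
proof -
  define w where "w = itv F y"
  have wc: "\<And>i. w i \<in> carrier_vec M" unfolding w_def using itv_carrier[OF F y(1)] .
  have wS: "\<And>i. F *\<^sub>v w i = w (Suc i)" unfolding w_def by simp
  define Y where "Y = mat (Suc M) (Suc M) (\<lambda>(t,i). if t < M then w i $ t else 0)"
  have Yc: "Y \<in> carrier_mat (Suc M) (Suc M)" unfolding Y_def by simp
  have YT: "Y\<^sup>T *\<^sub>v unit_vec (Suc M) M = 0\<^sub>v (Suc M)"
  proof (rule eq_vecI)
    fix i assume "i < dim_vec (0\<^sub>v (Suc M))"
    hence i: "i < Suc M" by simp
    have "(Y\<^sup>T *\<^sub>v unit_vec (Suc M) M) $ i = row Y\<^sup>T i \<bullet> unit_vec (Suc M) M"
      using i Yc by simp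
    also have "\<dots> = Y\<^sup>T $$ (i, M)"
      using i Yc by (subst scalar_prod_right_unit) auto
    also have "\<dots> = 0" using i unfolding Y_def by simp
    finally show "(Y\<^sup>T *\<^sub>v unit_vec (Suc M) M) $ i = 0\<^sub>v (Suc M) $ i" using i by simp
  qed (use Yc in simp)
  have "unit_vec (Suc M) M \<noteq> 0\<^sub>v (Suc M)"
  proof
    assume "unit_vec (Suc M) M = 0\<^sub>v (Suc M)"
    hence "unit_vec (Suc M) M $ M = 0\<^sub>v (Suc M) $ M" by simp
    thus False by simp
  qed
  hence "det Y\<^sup>T = 0"
    using YT det_0_iff_vec_prod_zero[of "Y\<^sup>T" "Suc M"] Yc unit_vec_carrier[of "Suc M" M]
    transpose_carrier_mat[of Y "Suc M" "Suc M"] by blast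
  hence "det Y = 0" using det_transpose[OF Yc] by simp
  then obtain c where c: "c \<in> carrier_vec (Suc M)" "c \<noteq> 0\<^sub>v (Suc M)" "Y *\<^sub>v c = 0\<^sub>v (Suc M)"
    using det_0_iff_vec_prod_zero[OF Yc] by blast
  have csum: "(\<Sum>i<Suc M. c $ i * w i $ t) = 0" if t: "t < M" for t
  proof -
    have "(Y *\<^sub>v c) $ t = 0" using c(3) t by simp
    moreover have "(Y *\<^sub>v c) $ t = (\<Sum>i<Suc M. w i $ t * c $ i)"
      using t c(1) Yc unfolding Y_def by (simp add: scalar_prod_def lessThan_atLeast0)
    ultimately show ?thesis by (simp add: mult.commute)
  qed
  define q :: "complex poly" where "q = (\<Sum>i<Suc M. monom (c $ i) i)"
  have cq: "coeff q i = (if i < Suc M then c $ i else 0)" for i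
    unfolding q_def by (simp add: coeff_sum coeff_monom)
  have q0: "q \<noteq> 0"
  proof
    assume "q = 0"
    hence "\<And>i. i < Suc M \<Longrightarrow> c $ i = 0" using cq by (metis coeff_0)
    hence "c = 0\<^sub>v (Suc M)" using c(1) by (intro eq_vecI) auto
    thus False using c(2) by simp
  qed
  have degq: "degree q \<le> M" by (rule degree_le) (simp add: cq)
  define app where "app p = vec M (\<lambda>t. \<Sum>i<Suc M. coeff p i * w i $ t)" for p :: "complex poly"
  have appc: "app p \<in> carrier_vec M" for p unfolding app_def by simp
  have appq: "app q = 0\<^sub>v M"
  proof (rule eq_vecI)
    fix t assume "t < dim_vec (0\<^sub>v M)"
    hence t: "t < M" by simp
    have "(\<Sum>i<Suc M. coeff q i * w i $ t) = (\<Sum>i<Suc M. c $ i * w i $ t)"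
      by (rule sum.cong) (auto simp: cq)
    thus "app q $ t = 0\<^sub>v M $ t" using csum[OF t] t by (simp add: app_def del: sum.lessThan_Suc)
  qed (simp add: app_def)
  have app1: "app 1 = y"
  proof (rule eq_vecI)
    fix t assume "t < dim_vec y"
    hence t: "t < M" using y by simp
    have "(\<Sum>i<Suc M. coeff 1 i * w i $ t) = (\<Sum>i<Suc M. (if i = 0 then w 0 $ t else 0))"
      by (rule sum.cong) (auto simp: coeff_1)
    also have "\<dots> = w 0 $ t" by simp
    finally show "app 1 $ t = y $ t" using t by (simp add: app_def w_def)
  qed (use y in \<open>simp add: app_def\<close>)
  have app_smult: "app (Polynomial.smult a p) = a \<cdot>\<^sub>v app p" for a p
    by (rule eq_vecI) (auto simp: app_def sum_distrib_left mult.assoc distrib_left simp del: sum.lessThan_Suc)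
  have app_mult: "app (p * [:-r, 1:]) = F *\<^sub>v app p - r \<cdot>\<^sub>v app p"
    if dp: "degree p < M" for p r
  proof (rule eq_vecI)
    fix t assume "t < dim_vec (F *\<^sub>v app p - r \<cdot>\<^sub>v app p)"
    hence t: "t < M" using F by (simp add: app_def)
    have pM: "coeff p M = 0" using dp by (simp add: coeff_eq_0)
    have e: "p * [:-r, 1:] = pCons 0 p + Polynomial.smult (-r) p"
      by (simp add: mult_pCons_right)
    have L1: "app (p * [:-r, 1:]) $ t = (\<Sum>i<Suc M. coeff (pCons 0 p) i * w i $ t)
        - r * (\<Sum>i<Suc M. coeff p i * w i $ t)"
      using t unfolding app_def e
      by (simp add: algebra_simps sum.distrib sum_distrib_left sum_subtractf del: sum.lessThan_Suc)
    have L2: "(\<Sum>i<Suc M. coeff (pCons 0 p) i * w i $ t) = (\<Sum>i<M. coeff p i * w (Suc i) $ t)"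
      by (subst sum.lessThan_Suc_shift) simp
    have R1: "(F *\<^sub>v app p) $ t = (\<Sum>i<Suc M. coeff p i * (F *\<^sub>v w i) $ t)"
      unfolding app_def by (rule mult_vec_sum[OF F t]) (auto simp: wc)
    have R2: "(\<Sum>i<Suc M. coeff p i * (F *\<^sub>v w i) $ t) = (\<Sum>i<M. coeff p i * w (Suc i) $ t)"
      by (simp add: wS pM)
    show "app (p * [:-r, 1:]) $ t = (F *\<^sub>v app p - r \<cdot>\<^sub>v app p) $ t"
      using t F appc[of p] L1 L2 R1 R2 by (simp add: app_def del: sum.lessThan_Suc)
  qed (use F in \<open>simp add: app_def\<close>)
  have appP: "P *\<^sub>v app p = 0\<^sub>v Q" if dp: "degree p < M" for p
  proof (rule eq_vecI)
    fix s assume "s < dim_vec (0\<^sub>v Q)"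
    hence s: "s < Q" by simp
    have pM: "coeff p M = 0" using dp by (simp add: coeff_eq_0)
    have "(P *\<^sub>v app p) $ s = (\<Sum>i<Suc M. coeff p i * (P *\<^sub>v w i) $ s)"
      unfolding app_def by (rule mult_vec_sum[OF P s]) (auto simp: wc)
    also have "\<dots> = 0"
      using ann s pM by (auto simp: w_def less_Suc_eq intro!: sum.neutral)
    finally show "(P *\<^sub>v app p) $ s = 0\<^sub>v Q $ s" using s by simp
  qed (use P in simp)
  obtain rs where rs: "Polynomial.smult (lead_coeff q) (\<Prod>a\<leftarrow>rs. [:- a, 1:]) = q" "length rs = degree q"
    using fundamental_theorem_algebra_factorized[of q] by blast
  define g where "g j = (\<Prod>a\<leftarrow>take j rs. [:- a, 1:])" for j
  have gS: "g (Suc j) = g j * [:- (rs ! j), 1:]" if "j < length rs" for j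
    unfolding g_def using that by (simp add: take_Suc_conv_app_nth)
  have gdeg: "degree (g j) \<le> j" if "j \<le> length rs" for j
    using that
  proof (induct j)
    case 0 then show ?case by (simp add: g_def)
  next
    case (Suc j)
    hence "degree (g (Suc j)) \<le> degree (g j) + degree [:- (rs ! j), 1:]"
      using gS[of j] degree_mult_le[of "g j" "[:- (rs ! j), 1:]"] by simp
    thus ?case using Suc by simp
  qed
  have lc: "lead_coeff q \<noteq> 0" using q0 by simp
  have gL: "app (g (length rs)) = 0\<^sub>v M"
  proof -
    have "q = Polynomial.smult (lead_coeff q) (g (length rs))" using rs(1) by (simp add: g_def)
    hence "lead_coeff q \<cdot>\<^sub>v app (g (length rs)) = 0\<^sub>v M" using appq app_smult by metis
    show ?thesis
    proof (rule eq_vecI)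
      fix t assume "t < dim_vec (0\<^sub>v M)"
      hence t: "t < M" by simp
      have "(lead_coeff q \<cdot>\<^sub>v app (g (length rs))) $ t = 0"
        using \<open>lead_coeff q \<cdot>\<^sub>v app (g (length rs)) = 0\<^sub>v M\<close> t by simp
      hence "lead_coeff q * app (g (length rs)) $ t = 0" using t by (simp add: app_def)
      thus "app (g (length rs)) $ t = 0\<^sub>v M $ t" using lc t by simp
    qed (simp add: app_def)
  qed
  have "\<exists>j < length rs. app (g j) \<noteq> 0\<^sub>v M \<and> app (g (Suc j)) = 0\<^sub>v M"
  proof (rule ccontr)
    assume na: "\<not> ?thesis"
    have "app (g j) \<noteq> 0\<^sub>v M" if "j \<le> length rs" for j
      using that
    proof (induct j)
      case 0 thus ?case using app1 y by (simp add: g_def)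
    next
      case (Suc j)
      hence "j < length rs" "app (g j) \<noteq> 0\<^sub>v M" by auto
      thus ?case using na by blast
    qed
    thus False using gL by simp
  qed
  then obtain j where j: "j < length rs" "app (g j) \<noteq> 0\<^sub>v M" "app (g (Suc j)) = 0\<^sub>v M" by blast
  have dj: "degree (g j) < M" using gdeg[of j] j(1) rs(2) degq by simp
  have "F *\<^sub>v app (g j) - (rs ! j) \<cdot>\<^sub>v app (g j) = 0\<^sub>v M"
    using j(3) gS[OF j(1)] app_mult[OF dj] by simp
  hence "F *\<^sub>v app (g j) = (rs ! j) \<cdot>\<^sub>v app (g j)"
    using vec_minus_eq0[OF mult_mat_vec_carrier[OF F appc[of "g j"]] smult_carrier_vec[THEN iffD2, OF appc[of "g j"]]] by blast
  thus ?thesis using appc j(2) appP[OF dj] by blast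
qed

lemma itv_shift: "A \<in> carrier_mat M M \<Longrightarrow> v \<in> carrier_vec M \<Longrightarrow> itv A (A *\<^sub>v v) n = A *\<^sub>v itv A v n"
  by (induct n) auto

lemma traj_carrier:
  assumes "\<Phi> \<in> carrier_mat M M" "\<Psi> \<in> carrier_mat M P" "X0 \<in> carrier_vec M"
    "\<And>k. U k \<in> carrier_vec P"
  shows "traj \<Phi> \<Psi> X0 U k \<in> carrier_vec M"
  using assms by (induct k) auto

lemma traj_split:
  assumes \<Phi>: "\<Phi> \<in> carrier_mat M M" and \<Psi>: "\<Psi> \<in> carrier_mat M P" and X0: "X0 \<in> carrier_vec M"
    and U: "\<And>k. U k \<in> carrier_vec P"
  shows "traj \<Phi> \<Psi> X0 U k = itv \<Phi> X0 k + traj \<Phi> \<Psi> (0\<^sub>v M) U k"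
proof (induct k)
  case 0 then show ?case using X0 by simp
next
  case (Suc k)
  have c1: "itv \<Phi> X0 k \<in> carrier_vec M" using itv_carrier[OF \<Phi> X0] .
  have c2: "traj \<Phi> \<Psi> (0\<^sub>v M) U k \<in> carrier_vec M" using traj_carrier[OF \<Phi> \<Psi> _ U] by simp
  have c3: "\<Psi> *\<^sub>v U k \<in> carrier_vec M" using \<Psi> U by simp
  have "traj \<Phi> \<Psi> X0 U (Suc k) = \<Phi> *\<^sub>v (itv \<Phi> X0 k + traj \<Phi> \<Psi> (0\<^sub>v M) U k) + \<Psi> *\<^sub>v U k"
    using Suc by simp
  also have "\<dots> = \<Phi> *\<^sub>v itv \<Phi> X0 k + (\<Phi> *\<^sub>v traj \<Phi> \<Psi> (0\<^sub>v M) U k + \<Psi> *\<^sub>v U k)"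
    using c1 c2 c3 \<Phi> by (simp add: mult_add_distrib_mat_vec[OF \<Phi>] assoc_add_vec[of _ M])
  finally show ?case by simp
qed

lemma traj_cong: "(\<And>j. j < k \<Longrightarrow> U j = U' j) \<Longrightarrow> traj \<Phi> \<Psi> X0 U k = traj \<Phi> \<Psi> X0 U' k"
  by (induct k) auto

lemma zero_mat_mult_vec: "w \<in> carrier_vec n \<Longrightarrow> 0\<^sub>m m n *\<^sub>v w = 0\<^sub>v m"
  by (intro eq_vecI) (auto simp: scalar_prod_def)

fun gram :: "real mat \<Rightarrow> real mat \<Rightarrow> nat \<Rightarrow> real mat" where
  "gram \<Phi> \<Psi> 0 = 0\<^sub>m (dim_row \<Phi>) (dim_row \<Phi>)"
| "gram \<Phi> \<Psi> (Suc k) = \<Phi> * gram \<Phi> \<Psi> k * \<Phi>\<^sup>T + \<Psi> * \<Psi>\<^sup>T"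

lemma gram_carrier: "\<Phi> \<in> carrier_mat M M \<Longrightarrow> \<Psi> \<in> carrier_mat M P \<Longrightarrow> gram \<Phi> \<Psi> k \<in> carrier_mat M M"
  by (induct k) auto

lemma traj_gram:
  assumes \<Phi>: "\<Phi> \<in> carrier_mat M M" and \<Psi>: "\<Psi> \<in> carrier_mat M P"
  shows "w \<in> carrier_vec M \<Longrightarrow>
    traj \<Phi> \<Psi> (0\<^sub>v M) (\<lambda>j. \<Psi>\<^sup>T *\<^sub>v itv \<Phi>\<^sup>T w (k - 1 - j)) k = gram \<Phi> \<Psi> k *\<^sub>v w"
proof (induct k arbitrary: w)
  case 0 then show ?case using \<Phi> by (simp add: zero_mat_mult_vec)
next
  case (Suc k)
  have PT: "\<Phi>\<^sup>T \<in> carrier_mat M M" using \<Phi> by simp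
  have w': "\<Phi>\<^sup>T *\<^sub>v w \<in> carrier_vec M" using PT Suc(2) by simp
  have G: "gram \<Phi> \<Psi> k \<in> carrier_mat M M" by (rule gram_carrier[OF \<Phi> \<Psi>])
  have "traj \<Phi> \<Psi> (0\<^sub>v M) (\<lambda>j. \<Psi>\<^sup>T *\<^sub>v itv \<Phi>\<^sup>T w (Suc k - 1 - j)) k
      = traj \<Phi> \<Psi> (0\<^sub>v M) (\<lambda>j. \<Psi>\<^sup>T *\<^sub>v itv \<Phi>\<^sup>T (\<Phi>\<^sup>T *\<^sub>v w) (k - 1 - j)) k"
  proof (rule traj_cong)
    fix j assume "j < k"
    hence "Suc k - 1 - j = Suc (k - 1 - j)" by simp
    thus "\<Psi>\<^sup>T *\<^sub>v itv \<Phi>\<^sup>T w (Suc k - 1 - j) = \<Psi>\<^sup>T *\<^sub>v itv \<Phi>\<^sup>T (\<Phi>\<^sup>T *\<^sub>v w) (k - 1 - j)"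
      using itv_shift[OF PT Suc(2)] by simp
  qed
  also have "\<dots> = gram \<Phi> \<Psi> k *\<^sub>v (\<Phi>\<^sup>T *\<^sub>v w)" using Suc(1)[OF w'] .
  finally have tk: "traj \<Phi> \<Psi> (0\<^sub>v M) (\<lambda>j. \<Psi>\<^sup>T *\<^sub>v itv \<Phi>\<^sup>T w (Suc k - 1 - j)) k
      = gram \<Phi> \<Psi> k *\<^sub>v (\<Phi>\<^sup>T *\<^sub>v w)" .
  have "traj \<Phi> \<Psi> (0\<^sub>v M) (\<lambda>j. \<Psi>\<^sup>T *\<^sub>v itv \<Phi>\<^sup>T w (Suc k - 1 - j)) (Suc k)
      = \<Phi> *\<^sub>v (gram \<Phi> \<Psi> k *\<^sub>v (\<Phi>\<^sup>T *\<^sub>v w)) + \<Psi> *\<^sub>v (\<Psi>\<^sup>T *\<^sub>v w)"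
    using tk by simp
  also have "\<dots> = (\<Phi> * gram \<Phi> \<Psi> k * \<Phi>\<^sup>T + \<Psi> * \<Psi>\<^sup>T) *\<^sub>v w"
    using \<Phi> \<Psi> G Suc(2) PT
    by (simp add: add_mult_distrib_mat_vec[of _ M M] assoc_mult_mat_vec[of _ M M _ M])
  finally show ?case by simp
qed

lemma self_scalar_real:
  fixes x :: "real vec"
  shows "x \<bullet> x \<ge> 0" "x \<bullet> x = 0 \<Longrightarrow> x \<in> carrier_vec n \<Longrightarrow> x = 0\<^sub>v n"
proof -
  show "x \<bullet> x \<ge> 0" unfolding scalar_prod_def by (auto intro: sum_nonneg)
  assume "x \<bullet> x = 0" "x \<in> carrier_vec n"
  hence "\<forall>i\<in>{0..<dim_vec x}. x $ i * x $ i = 0"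
    unfolding scalar_prod_def by (subst sum_nonneg_eq_0_iff[symmetric]) auto
  thus "x = 0\<^sub>v n" using \<open>x \<in> carrier_vec n\<close> by (intro eq_vecI) auto
qed

lemma gram_quad:
  assumes \<Phi>: "\<Phi> \<in> carrier_mat M M" and \<Psi>: "\<Psi> \<in> carrier_mat M P"
  shows "x \<in> carrier_vec M \<Longrightarrow> x \<bullet> (gram \<Phi> \<Psi> k *\<^sub>v x) \<ge> 0 \<and>
    (x \<bullet> (gram \<Phi> \<Psi> k *\<^sub>v x) = 0 \<longrightarrow> (\<forall>j<k. \<Psi>\<^sup>T *\<^sub>v itv \<Phi>\<^sup>T x j = 0\<^sub>v P))"
proof (induct k arbitrary: x)
  case 0 then show ?case using \<Phi> by (simp add: zero_mat_mult_vec)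
next
  case (Suc k)
  have x: "x \<in> carrier_vec M" by fact
  have PT: "\<Phi>\<^sup>T \<in> carrier_mat M M" using \<Phi> by simp
  have x': "\<Phi>\<^sup>T *\<^sub>v x \<in> carrier_vec M" using PT x by simp
  have G: "gram \<Phi> \<Psi> k \<in> carrier_mat M M" by (rule gram_carrier[OF \<Phi> \<Psi>])
  define a where "a = (\<Phi>\<^sup>T *\<^sub>v x) \<bullet> (gram \<Phi> \<Psi> k *\<^sub>v (\<Phi>\<^sup>T *\<^sub>v x))"
  define b where "b = (\<Psi>\<^sup>T *\<^sub>v x) \<bullet> (\<Psi>\<^sup>T *\<^sub>v x)"
  have "gram \<Phi> \<Psi> (Suc k) *\<^sub>v x = \<Phi> *\<^sub>v (gram \<Phi> \<Psi> k *\<^sub>v (\<Phi>\<^sup>T *\<^sub>v x)) + \<Psi> *\<^sub>v (\<Psi>\<^sup>T *\<^sub>v x)"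
    using \<Phi> \<Psi> G x PT
    by (simp add: add_mult_distrib_mat_vec[of _ M M] assoc_mult_mat_vec[of _ M M _ M])
  hence "x \<bullet> (gram \<Phi> \<Psi> (Suc k) *\<^sub>v x)
      = x \<bullet> (\<Phi> *\<^sub>v (gram \<Phi> \<Psi> k *\<^sub>v (\<Phi>\<^sup>T *\<^sub>v x))) + x \<bullet> (\<Psi> *\<^sub>v (\<Psi>\<^sup>T *\<^sub>v x))"
    using \<Phi> \<Psi> G x x' by (simp add: scalar_prod_add_distrib[of _ M])
  also have "x \<bullet> (\<Phi> *\<^sub>v (gram \<Phi> \<Psi> k *\<^sub>v (\<Phi>\<^sup>T *\<^sub>v x))) = a"
    unfolding a_def using \<Phi> G x x' by (subst transpose_vec_mult_scalar[symmetric, of _ M M]) auto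
  also have "x \<bullet> (\<Psi> *\<^sub>v (\<Psi>\<^sup>T *\<^sub>v x)) = b"
    unfolding b_def using \<Psi> x by (subst transpose_vec_mult_scalar[symmetric, of _ M P]) auto
  finally have eq: "x \<bullet> (gram \<Phi> \<Psi> (Suc k) *\<^sub>v x) = a + b" .
  have IH: "a \<ge> 0 \<and> (a = 0 \<longrightarrow> (\<forall>j<k. \<Psi>\<^sup>T *\<^sub>v itv \<Phi>\<^sup>T (\<Phi>\<^sup>T *\<^sub>v x) j = 0\<^sub>v P))"
    unfolding a_def by (rule Suc(1)[OF x'])
  have b0: "b \<ge> 0" unfolding b_def by (rule self_scalar_real(1))
  show ?case
  proof (intro conjI impI allI)
    show "0 \<le> x \<bullet> (gram \<Phi> \<Psi> (Suc k) *\<^sub>v x)" using eq IH b0 by simp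
    fix j assume z: "x \<bullet> (gram \<Phi> \<Psi> (Suc k) *\<^sub>v x) = 0" and j: "j < Suc k"
    hence a0: "a = 0" and bz: "b = 0" using eq IH b0 by auto
    show "\<Psi>\<^sup>T *\<^sub>v itv \<Phi>\<^sup>T x j = 0\<^sub>v P"
    proof (cases j)
      case 0
      thus ?thesis using self_scalar_real(2)[OF bz[unfolded b_def], of P] \<Psi> x by simp
    next
      case (Suc j')
      hence "j' < k" using j by simp
      hence "\<Psi>\<^sup>T *\<^sub>v itv \<Phi>\<^sup>T (\<Phi>\<^sup>T *\<^sub>v x) j' = 0\<^sub>v P" using IH a0 by blast
      thus ?thesis using Suc itv_shift[OF PT x] by simp
    qed
  qed
qed

lemma itv_hom: "A \<in> carrier_mat M M \<Longrightarrow> v \<in> carrier_vec M \<Longrightarrow>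
  itv (cmat A) (map_vec complex_of_real v) j = map_vec complex_of_real (itv A v j)"
proof (induct j)
  case (Suc j)
  have "itv (cmat A) (map_vec complex_of_real v) (Suc j) = cmat A *\<^sub>v map_vec complex_of_real (itv A v j)"
    using Suc by simp
  also have "\<dots> = map_vec complex_of_real (A *\<^sub>v itv A v j)"
    using of_real_hom.mult_mat_vec_hom[of A M M "itv A v j"] itv_carrier[of A M v j] Suc by metis
  finally show ?case by simp
qed simp

lemma pbh_ctrb:
  fixes \<Phi> \<Psi> :: "real mat"
  assumes \<Phi>: "\<Phi> \<in> carrier_mat M M" and \<Psi>: "\<Psi> \<in> carrier_mat M P"
    and pbh: "\<And>z \<theta>. z \<in> carrier_vec M \<Longrightarrow> (cmat \<Phi>)\<^sup>T *\<^sub>v z = \<theta> \<cdot>\<^sub>v z \<Longrightarrow>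
       (cmat \<Psi>)\<^sup>T *\<^sub>v z = 0\<^sub>v P \<Longrightarrow> z = 0\<^sub>v M"
  shows "ds_controllable \<Phi> \<Psi>"
proof -
  define G where "G = gram \<Phi> \<Psi> M"
  have G: "G \<in> carrier_mat M M" unfolding G_def by (rule gram_carrier[OF \<Phi> \<Psi>])
  have PT: "\<Phi>\<^sup>T \<in> carrier_mat M M" using \<Phi> by simp
  have QT: "\<Psi>\<^sup>T \<in> carrier_mat P M" using \<Psi> by simp
  have dG: "det G \<noteq> 0"
  proof
    assume "det G = 0"
    then obtain y where y: "y \<in> carrier_vec M" "y \<noteq> 0\<^sub>v M" "G *\<^sub>v y = 0\<^sub>v M"
      using det_0_iff_vec_prod_zero[OF G] by blast
    have "y \<bullet> (G *\<^sub>v y) = 0" using y by simp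
    hence ann: "\<And>j. j < M \<Longrightarrow> \<Psi>\<^sup>T *\<^sub>v itv \<Phi>\<^sup>T y j = 0\<^sub>v P"
      using gram_quad[OF \<Phi> \<Psi> y(1), of M] unfolding G_def by blast
    define y' where "y' = map_vec complex_of_real y"
    have y': "y' \<in> carrier_vec M" "y' \<noteq> 0\<^sub>v M" using y unfolding y'_def by auto
    have F: "cmat (\<Phi>\<^sup>T) \<in> carrier_mat M M" using PT by simp
    have Pc: "cmat (\<Psi>\<^sup>T) \<in> carrier_mat P M" using QT by simp
    have ann': "cmat (\<Psi>\<^sup>T) *\<^sub>v itv (cmat (\<Phi>\<^sup>T)) y' j = 0\<^sub>v P" if j: "j < M" for j
    proof -
      have "cmat (\<Psi>\<^sup>T) *\<^sub>v itv (cmat (\<Phi>\<^sup>T)) y' j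
          = map_vec complex_of_real (\<Psi>\<^sup>T *\<^sub>v itv \<Phi>\<^sup>T y j)"
        unfolding y'_def itv_hom[OF PT y(1)]
        using of_real_hom.mult_mat_vec_hom[OF QT itv_carrier[OF PT y(1)]] by metis
      also have "\<dots> = 0\<^sub>v P" using ann[OF j] by simp
      finally show ?thesis .
    qed
    obtain z \<theta> where z: "z \<in> carrier_vec M" "z \<noteq> 0\<^sub>v M" "cmat (\<Phi>\<^sup>T) *\<^sub>v z = \<theta> \<cdot>\<^sub>v z"
      "cmat (\<Psi>\<^sup>T) *\<^sub>v z = 0\<^sub>v P"
      using eig_exists[OF F Pc y' ann'] by blast
    have "z = 0\<^sub>v M" using pbh[OF z(1)] z(3,4) by (simp add: map_mat_transpose)
    thus False using z(2) by simp
  qed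
  show ?thesis unfolding ds_controllable_def
  proof (intro ballI)
    fix X0 :: "real vec" assume "X0 \<in> carrier_vec (dim_row \<Phi>)"
    hence X0: "X0 \<in> carrier_vec M" using \<Phi> by simp
    define b where "b = - itv \<Phi> X0 M"
    have b: "b \<in> carrier_vec M" unfolding b_def using itv_carrier[OF \<Phi> X0] by simp
    define w where "w = (1 / det G) \<cdot>\<^sub>v (adj_mat G *\<^sub>v b)"
    have A: "adj_mat G \<in> carrier_mat M M" using adj_mat(1)[OF G] .
    have w: "w \<in> carrier_vec M" unfolding w_def using A b by simp
    have Gw: "G *\<^sub>v w = b"
    proof -
      have "G *\<^sub>v w = (1 / det G) \<cdot>\<^sub>v ((G * adj_mat G) *\<^sub>v b)"
        unfolding w_def using G A b by (simp add: mult_mat_vec[of _ M M])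
      also have "(det G \<cdot>\<^sub>m 1\<^sub>m M) *\<^sub>v b = det G \<cdot>\<^sub>v b"
      proof (intro eq_vecI)
        fix i assume "i < dim_vec (det G \<cdot>\<^sub>v b)"
        hence i: "i < M" using b by simp
        have "(\<Sum>ia = 0..<M. det G * (if ia = i then 1 else 0) * b $ ia)
            = (\<Sum>ia = 0..<M. if ia = i then det G * b $ ia else 0)"
          by (rule sum.cong) auto
        also have "\<dots> = det G * b $ i" using i by simp
        finally show "((det G \<cdot>\<^sub>m 1\<^sub>m M) *\<^sub>v b) $ i = (det G \<cdot>\<^sub>v b) $ i"
          using i b by (simp add: scalar_prod_def)
      qed (use b in simp)
      hence "(G * adj_mat G) *\<^sub>v b = det G \<cdot>\<^sub>v b" using adj_mat(2)[OF G] by simp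
      hence "(1 / det G) \<cdot>\<^sub>v ((G * adj_mat G) *\<^sub>v b) = (1 / det G) \<cdot>\<^sub>v (det G \<cdot>\<^sub>v b)"
        by simp
      also have "\<dots> = b" using dG by (simp add: smult_smult_assoc)
      finally show ?thesis .
    qed
    define U where "U = (\<lambda>j. \<Psi>\<^sup>T *\<^sub>v itv \<Phi>\<^sup>T w (M - 1 - j))"
    have U: "\<And>k. U k \<in> carrier_vec P" unfolding U_def carrier_vec_def using \<Psi> by simp
    have "traj \<Phi> \<Psi> X0 U M = itv \<Phi> X0 M + traj \<Phi> \<Psi> (0\<^sub>v M) U M"
      by (rule traj_split[OF \<Phi> \<Psi> X0 U])
    also have "traj \<Phi> \<Psi> (0\<^sub>v M) U M = G *\<^sub>v w"
      unfolding U_def G_def by (rule traj_gram[OF \<Phi> \<Psi> w])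
    finally have "traj \<Phi> \<Psi> X0 U M = 0\<^sub>v M"
      using Gw b itv_carrier[OF \<Phi> X0] unfolding b_def by simp
    moreover have "\<forall>k. U k \<in> carrier_vec (dim_col \<Psi>)" using U \<Psi> by simp
    ultimately show "\<exists>K U. (\<forall>k. U k \<in> carrier_vec (dim_col \<Psi>)) \<and> traj \<Phi> \<Psi> X0 U K = 0\<^sub>v (dim_row \<Phi>)"
      using \<Phi> by auto
  qed
qed

lemma sum_ivl_shift: "sum g {(c::nat)..<c+k} = (\<Sum>a<k. g (c+a))"
  by (induct k) (auto simp: add.commute)

lemma sum_split_blocks: "(\<Sum>r<(N::nat)*n. f r) = (\<Sum>i<N. \<Sum>a<n. f (i*n+a))"
  using sum.nat_group[of f n N, symmetric] by (simp add: sum_ivl_shift)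

lemma blk_div: "(b::nat) < n \<Longrightarrow> (j*n+b) div n = j" by simp
lemma blk_mod: "(b::nat) < n \<Longrightarrow> (j*n+b) mod n = b" by simp
lemma blk_lt: "(j::nat) < N \<Longrightarrow> b < n \<Longrightarrow> j*n+b < N*n"
proof -
  assume "j < N" "b < n"
  hence "j*n+b < j*n + n" by simp
  also have "\<dots> = Suc j * n" by simp
  also have "\<dots> \<le> N * n" using \<open>j < N\<close> by (intro mult_le_mono1) simp
  finally show ?thesis .
qed

lemma vec_eq_blocks:
  fixes x y :: "'a vec"
  assumes "x \<in> carrier_vec (N*n)" "y \<in> carrier_vec (N*n)"
    and "\<And>i a. i < N \<Longrightarrow> a < n \<Longrightarrow> x $ (i*n+a) = y $ (i*n+a)"
  shows "x = y"
proof (rule eq_vecI)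
  fix r assume "r < dim_vec y"
  hence r: "r < N*n" using assms by simp
  hence n: "0 < n" by (cases n) auto
  have "r div n < N" using r by (simp add: less_mult_imp_div_less)
  moreover have "r mod n < n" using n by simp
  moreover have "r = (r div n)*n + r mod n" by simp
  ultimately show "x $ r = y $ r" using assms(3) by metis
qed (use assms in simp)

lemma kron_T_mult:
  fixes X Y :: "'a :: comm_ring_1 mat"
  assumes X: "X \<in> carrier_mat N N'" and Y: "Y \<in> carrier_mat n n'"
    and z: "z \<in> carrier_vec (N*n)" and j: "j < N'" and b: "b < n'"
  shows "((kron X Y)\<^sup>T *\<^sub>v z) $ (j*n'+b) = (\<Sum>i<N. X $$ (i,j) * (\<Sum>a<n. Y $$ (a,b) * z $ (i*n+a)))"
proof -
  have jb: "j*n'+b < N'*n'" by (rule blk_lt[OF j b])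
  have K: "kron X Y \<in> carrier_mat (N*n) (N'*n')" using X Y unfolding kron_def by auto
  have "((kron X Y)\<^sup>T *\<^sub>v z) $ (j*n'+b) = (\<Sum>r<N*n. kron X Y $$ (r, j*n'+b) * z $ r)"
    using K z jb by (simp add: scalar_prod_def lessThan_atLeast0)
  also have "\<dots> = (\<Sum>i<N. \<Sum>a<n. kron X Y $$ (i*n+a, j*n'+b) * z $ (i*n+a))"
    by (rule sum_split_blocks)
  also have "\<dots> = (\<Sum>i<N. \<Sum>a<n. X $$ (i,j) * (Y $$ (a,b) * z $ (i*n+a)))"
  proof (intro sum.cong refl)
    fix i a assume "i \<in> {..<N}" "a \<in> {..<n}"
    hence i: "i < N" and a: "a < n" by auto
    have "i*n+a < N*n" by (rule blk_lt[OF i a])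
    thus "kron X Y $$ (i*n+a, j*n'+b) * z $ (i*n+a) = X $$ (i,j) * (Y $$ (a,b) * z $ (i*n+a))"
      using X Y jb a b unfolding kron_def by simp
  qed
  also have "\<dots> = (\<Sum>i<N. X $$ (i,j) * (\<Sum>a<n. Y $$ (a,b) * z $ (i*n+a)))"
    by (simp add: sum_distrib_left)
  finally show ?thesis .
qed

lemma cmat_kron: "cmat (kron X Y) = kron (cmat X) (cmat Y)"
proof (rule eq_matI)
  fix i j assume "i < dim_row (kron (cmat X) (cmat Y))" "j < dim_col (kron (cmat X) (cmat Y))"
  hence i: "i < dim_row X * dim_row Y" and j: "j < dim_col X * dim_col Y" unfolding kron_def by auto
  have "i div dim_row Y < dim_row X" "j div dim_col Y < dim_col X"
    using i j by (auto simp: less_mult_imp_div_less)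
  moreover have "i mod dim_row Y < dim_row Y" "j mod dim_col Y < dim_col Y"
    using i j by (metis mod_less_divisor mult_0_right not_gr_zero not_less_zero)+
  ultimately show "cmat (kron X Y) $$ (i, j) = kron (cmat X) (cmat Y) $$ (i, j)"
    using i j unfolding kron_def by simp
qed (auto simp: kron_def)

lemma cmat_add: "X \<in> carrier_mat a b \<Longrightarrow> Y \<in> carrier_mat a b \<Longrightarrow> cmat (X + Y) = cmat X + cmat Y"
  by (rule eq_matI) auto

lemma row_mult_T: "(x :: 'a :: comm_semiring_0 vec) \<in> carrier_vec (dim_row M) \<Longrightarrow> row_mult x M = M\<^sup>T *\<^sub>v x"
proof -
  assume x: "x \<in> carrier_vec (dim_row M)"
  show ?thesis unfolding row_mult_def
  proof (rule eq_vecI)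
    fix i assume "i < dim_vec (M\<^sup>T *\<^sub>v x)"
    hence i: "i < dim_col M" by simp
    have "col M i \<in> carrier_vec (dim_row M)" by simp
    thus "vec (dim_col M) (\<lambda>j. x \<bullet> col M j) $ i = (M\<^sup>T *\<^sub>v x) $ i"
      using comm_scalar_prod[OF x, of "col M i"] i by simp
  qed simp
qed

lemma row_mult_index: "j < dim_col M \<Longrightarrow> x \<in> carrier_vec (dim_row M) \<Longrightarrow>
    row_mult x M $ j = (\<Sum>t<dim_row M. x $ t * M $$ (t,j))"
  unfolding row_mult_def by (simp add: scalar_prod_def lessThan_atLeast0)

lemma (in vec_space) rank_lt:
  assumes G: "G \<in> carrier_mat n s" and x: "x \<in> carrier_vec n" "x \<noteq> 0\<^sub>v n"
    and xG: "row_mult x G = 0\<^sub>v s"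
  shows "rank G \<noteq> n"
proof
  assume rk: "rank G = n"
  obtain S where S: "maximal S (\<lambda>T. T \<subseteq> set (cols G) \<and> lin_indpt T)"
    using maximal_exists[of "(\<lambda>T. T \<subseteq> set (cols G) \<and> lin_indpt T)" "card (set (cols G))" "{}"]
    by (meson List.finite_set card_mono empty_iff empty_subsetI finite_lin_indpt2 rev_finite_subset)
  have cS: "card S = n" using rank_card_indpt[OF G S] rk by simp
  have Ssub: "S \<subseteq> set (cols G)" and Sli: "lin_indpt S"
    using S unfolding maximal_def by auto
  have fS: "finite S" using Ssub finite_subset by blast
  obtain L where L: "set L = S" "distinct L" using finite_distinct_list[OF fS] by blast
  have lenL: "length L = n" using distinct_card[OF L(2)] L(1) cS by simp
  have "set (cols G) \<subseteq> carrier_vec n" using G cols_dim by (metis carrier_matD(1))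
  hence Lc: "set L \<subseteq> carrier_vec n" using L(1) Ssub by simp
  define Sq where "Sq = mat_of_cols n L"
  have Sq: "Sq \<in> carrier_mat n n" unfolding Sq_def using mat_of_cols_carrier(1)[of n L] lenL by simp
  have cSq: "cols Sq = L" unfolding Sq_def using cols_mat_of_cols[OF Lc] .
  have "rank Sq = n"
    by (rule lin_indpt_full_rank[OF Sq]) (simp_all only: cSq L Sli not_False_eq_True)
  hence d: "det Sq \<noteq> 0" using det_rank_iff[OF Sq] by simp
  have "Sq\<^sup>T *\<^sub>v x = 0\<^sub>v n"
  proof (rule eq_vecI)
    fix i assume "i < dim_vec (0\<^sub>v n)"
    hence i: "i < n" by simp
    have "L ! i \<in> set L" using i lenL by simp
    hence "L ! i \<in> set (cols G)" using L(1) Ssub by blast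
    then obtain jj where jj0: "jj < length (cols G)" "cols G ! jj = L ! i"
      by (auto simp: in_set_conv_nth)
    hence jj: "jj < dim_col G" "L ! i = col G jj" by simp_all
    have e0: "(Sq\<^sup>T *\<^sub>v x) $ i = row Sq\<^sup>T i \<bullet> x" using i Sq by (intro index_mult_mat_vec) simp
    have "row Sq\<^sup>T i = col Sq i" using i Sq by (intro row_transpose) simp
    hence e1: "(Sq\<^sup>T *\<^sub>v x) $ i = col Sq i \<bullet> x" using e0 by simp
    have e2: "col Sq i = col G jj" using cols_nth[of i Sq] cSq i Sq jj by simp
    have cG: "col G jj \<in> carrier_vec n" using col_dim[of G jj] G by simp
    have e3: "col G jj \<bullet> x = x \<bullet> col G jj" by (rule comm_scalar_prod[OF cG x(1)])
    have e4: "x \<bullet> col G jj = row_mult x G $ jj" unfolding row_mult_def using jj by simp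
    have e5: "row_mult x G $ jj = 0" using xG jj G by simp
    show "(Sq\<^sup>T *\<^sub>v x) $ i = 0\<^sub>v n $ i" using i e1 e2 e3 e4 e5 by simp
  qed (use Sq in simp)
  hence "\<exists>v. v \<in> carrier_vec n \<and> v \<noteq> 0\<^sub>v n \<and> Sq\<^sup>T *\<^sub>v v = 0\<^sub>v n" using x by blast
  moreover have SqT: "Sq\<^sup>T \<in> carrier_mat n n" using Sq by simp
  ultimately have "det Sq\<^sup>T = 0" using det_0_iff_vec_prod_zero[OF SqT] by simp
  thus False using d det_transpose[OF Sq] by simp
qed

lemma hcat_index: "t < dim_row F \<Longrightarrow> j < dim_col F + dim_col G \<Longrightarrow>
  hcat F G $$ (t,j) = (if j < dim_col F then F $$ (t,j) else G $$ (t, j - dim_col F))"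
  unfolding hcat_def by (subst index_mat_four_block) auto

lemma hcat_carrier: "F \<in> carrier_mat q c1 \<Longrightarrow> G \<in> carrier_mat q c2 \<Longrightarrow> hcat F G \<in> carrier_mat q (c1 + c2)"
  unfolding hcat_def carrier_mat_def by auto

lemma row_mult_hcat_zero:
  fixes F G :: "'a :: comm_ring_1 mat"
  assumes F: "F \<in> carrier_mat q c1" and G: "G \<in> carrier_mat q c2" and x: "x \<in> carrier_vec q"
    and xF: "row_mult x F = 0\<^sub>v c1" and xG: "row_mult x G = 0\<^sub>v c2"
  shows "row_mult x (hcat F G) = 0\<^sub>v (c1 + c2)"
proof (rule eq_vecI)
  have H: "hcat F G \<in> carrier_mat q (c1 + c2)" using F G by (rule hcat_carrier)
  fix j assume "j < dim_vec (0\<^sub>v (c1 + c2))"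
  hence j: "j < c1 + c2" by simp
  have "row_mult x (hcat F G) $ j = (\<Sum>t<q. x $ t * hcat F G $$ (t,j))"
    using row_mult_index[of j "hcat F G" x] H j x by simp
  also have "\<dots> = (if j < c1 then row_mult x F $ j else row_mult x G $ (j - c1))"
  proof (cases "j < c1")
    case True
    have "(\<Sum>t<q. x $ t * hcat F G $$ (t,j)) = (\<Sum>t<q. x $ t * F $$ (t,j))"
      by (rule sum.cong[OF refl]) (use F G j True in \<open>simp add: hcat_index\<close>)
    thus ?thesis using True row_mult_index[of j F x] F x by simp
  next
    case False
    have "(\<Sum>t<q. x $ t * hcat F G $$ (t,j)) = (\<Sum>t<q. x $ t * G $$ (t,j - c1))"
      by (rule sum.cong[OF refl]) (use F G j False in \<open>simp add: hcat_index\<close>)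
    thus ?thesis using False row_mult_index[of "j - c1" G x] G x j by simp
  qed
  also have "\<dots> = 0" using xF xG j by auto
  finally show "row_mult x (hcat F G) $ j = 0\<^sub>v (c1 + c2) $ j" using j by simp
next
  have H: "hcat F G \<in> carrier_mat q (c1 + c2)" using F G by (rule hcat_carrier)
  show "dim_vec (row_mult x (hcat F G)) = dim_vec (0\<^sub>v (c1 + c2))"
    using H unfolding row_mult_def by simp
qed

lemma row_mult_shift:
  fixes F :: "'a :: comm_ring_1 mat"
  assumes F: "F \<in> carrier_mat q q" and x: "x \<in> carrier_vec q" and xF: "row_mult x F = \<theta> \<cdot>\<^sub>v x"
  shows "row_mult x (\<theta> \<cdot>\<^sub>m 1\<^sub>m q - F) = 0\<^sub>v q"
proof -
  have M: "\<theta> \<cdot>\<^sub>m 1\<^sub>m q - F \<in> carrier_mat q q" using F by (rule minus_carrier_mat)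
  show "row_mult x (\<theta> \<cdot>\<^sub>m 1\<^sub>m q - F) = 0\<^sub>v q"
  proof (rule eq_vecI)
    fix j assume "j < dim_vec (0\<^sub>v q)"
    hence j: "j < q" by simp
    have "row_mult x (\<theta> \<cdot>\<^sub>m 1\<^sub>m q - F) $ j = (\<Sum>t<q. x $ t * (\<theta> * (if t = j then 1 else 0) - F $$ (t,j)))"
      using row_mult_index[of j "\<theta> \<cdot>\<^sub>m 1\<^sub>m q - F" x] M j x F by simp
    also have "\<dots> = (\<Sum>t<q. (if t = j then \<theta> * x $ t else 0) - x $ t * F $$ (t,j))"
      by (rule sum.cong) (auto simp: algebra_simps)
    also have "\<dots> = (\<Sum>t<q. (if t = j then \<theta> * x $ t else 0)) - (\<Sum>t<q. x $ t * F $$ (t,j))"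
      by (rule sum_subtractf)
    also have "(\<Sum>t<q. (if t = j then \<theta> * x $ t else 0)) = \<theta> * x $ j" using j by simp
    also have "(\<Sum>t<q. x $ t * F $$ (t,j)) = row_mult x F $ j"
      using row_mult_index[of j F x] F j x by simp
    also have "\<dots> = \<theta> * x $ j" using xF j x by simp
    finally show "row_mult x (\<theta> \<cdot>\<^sub>m 1\<^sub>m q - F) $ j = 0\<^sub>v q $ j" using j by simp
  qed (use F in \<open>simp add: row_mult_def\<close>)
qed

lemma ctrb_left:
  fixes F G :: "complex mat"
  assumes ct: "ctrb_pair F G" and F: "F \<in> carrier_mat q q" and G: "G \<in> carrier_mat q c"
    and x: "x \<in> carrier_vec q" "x \<noteq> 0\<^sub>v q" and xF: "row_mult x F = \<theta> \<cdot>\<^sub>v x"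
  shows "row_mult x G \<noteq> 0\<^sub>v c"
proof
  assume xG: "row_mult x G = 0\<^sub>v c"
  have M: "\<theta> \<cdot>\<^sub>m 1\<^sub>m q - F \<in> carrier_mat q q" using F by (rule minus_carrier_mat)
  have "row_mult x (\<theta> \<cdot>\<^sub>m 1\<^sub>m q - F) = 0\<^sub>v q" by (rule row_mult_shift[OF F x(1) xF])
  hence Z: "row_mult x (hcat (\<theta> \<cdot>\<^sub>m 1\<^sub>m q - F) G) = 0\<^sub>v (q + c)"
    using row_mult_hcat_zero[OF M G x(1) _ xG] by simp
  have HC: "hcat (\<theta> \<cdot>\<^sub>m 1\<^sub>m q - F) G \<in> carrier_mat q (q + c)"
    using M G by (rule hcat_carrier)
  have "vec_space.rank q (hcat (\<theta> \<cdot>\<^sub>m 1\<^sub>m q - F) G) \<noteq> q"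
    by (rule vec_space.rank_lt[OF HC x Z])
  moreover have "vec_space.rank q (hcat (\<theta> \<cdot>\<^sub>m 1\<^sub>m q - F) G) = q"
    using ct F unfolding ctrb_pair_def by (metis carrier_matD(1))
  ultimately show False by simp
qed



lemma kron_carrier: "X \<in> carrier_mat a b \<Longrightarrow> Y \<in> carrier_mat c d \<Longrightarrow> kron X Y \<in> carrier_mat (a*c) (b*d)"
  unfolding kron_def carrier_mat_def by auto

lemma kron_vec_index: "r < dim_vec x * dim_vec y \<Longrightarrow> kron_vec x y $ r = x $ (r div dim_vec y) * y $ (r mod dim_vec y)"
  unfolding kron_vec_def by simp

lemma kron_vec_dim[simp]: "dim_vec (kron_vec x y) = dim_vec x * dim_vec y"
  unfolding kron_vec_def by simp

lemma smult_one_mult_vec: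
  fixes v :: "'a :: comm_ring_1 vec"
  assumes v: "v \<in> carrier_vec q"
  shows "(\<theta> \<cdot>\<^sub>m 1\<^sub>m q) *\<^sub>v v = \<theta> \<cdot>\<^sub>v v"
proof (rule eq_vecI)
  fix i assume "i < dim_vec (\<theta> \<cdot>\<^sub>v v)"
  hence i: "i < q" using v by simp
  have "(\<Sum>ia = 0..<q. \<theta> * (if ia = i then 1 else 0) * v $ ia)
      = (\<Sum>ia = 0..<q. if ia = i then \<theta> * v $ ia else 0)"
    by (rule sum.cong) auto
  also have "\<dots> = \<theta> * v $ i" using i by simp
  finally show "((\<theta> \<cdot>\<^sub>m 1\<^sub>m q) *\<^sub>v v) $ i = (\<theta> \<cdot>\<^sub>v v) $ i"
    using i v by (simp add: scalar_prod_def)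
qed (use v in simp)

lemma left_eig_eigenvalue:
  fixes E :: "complex mat"
  assumes E: "E \<in> carrier_mat q q" and x: "x \<in> carrier_vec q" "x \<noteq> 0\<^sub>v q"
    and xE: "row_mult x E = \<theta> \<cdot>\<^sub>v x"
  shows "eigenvalue E \<theta>"
proof -
  define M where "M = \<theta> \<cdot>\<^sub>m 1\<^sub>m q - E"
  have M: "M \<in> carrier_mat q q" unfolding M_def using E by (rule minus_carrier_mat)
  have MT: "M\<^sup>T \<in> carrier_mat q q" using M by simp
  have "row_mult x M = 0\<^sub>v q" unfolding M_def by (rule row_mult_shift[OF E x(1) xE])
  hence "M\<^sup>T *\<^sub>v x = 0\<^sub>v q" using row_mult_T[of x M] M x by simp
  hence "\<exists>v. v \<in> carrier_vec q \<and> v \<noteq> 0\<^sub>v q \<and> M\<^sup>T *\<^sub>v v = 0\<^sub>v q" using x by blast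
  hence "det M\<^sup>T = 0" using det_0_iff_vec_prod_zero[OF MT] by simp
  hence "det M = 0" using det_transpose[OF M] by simp
  then obtain v where v: "v \<in> carrier_vec q" "v \<noteq> 0\<^sub>v q" "M *\<^sub>v v = 0\<^sub>v q"
    using det_0_iff_vec_prod_zero[OF M] by blast
  have "M *\<^sub>v v = \<theta> \<cdot>\<^sub>v v - E *\<^sub>v v"
    unfolding M_def using minus_mult_distrib_mat_vec[of "\<theta> \<cdot>\<^sub>m 1\<^sub>m q" q q E v] E v smult_one_mult_vec[OF v(1)]
    by simp
  hence "\<theta> \<cdot>\<^sub>v v - E *\<^sub>v v = 0\<^sub>v q" using v(3) by simp
  hence "\<theta> \<cdot>\<^sub>v v = E *\<^sub>v v"
    by (rule vec_minus_eq0[OF smult_carrier_vec[THEN iffD2, OF v(1)] mult_mat_vec_carrier[OF E v(1)]])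
  thus ?thesis unfolding eigenvalue_def eigenvector_def using v E by auto
qed


theorem theorem2:
  fixes N n m p :: nat
    and A B C H W :: "real mat"
    and \<delta> :: "nat \<Rightarrow> real"
    and h :: real
    and v :: "nat \<Rightarrow> complex vec"
    and lam :: "nat \<Rightarrow> complex"
  assumes pos: "0 < N" "0 < n" "0 < m" "0 < p"
    and A: "A \<in> carrier_mat n n" and B: "B \<in> carrier_mat n p"
    and C: "C \<in> carrier_mat m n" and H: "H \<in> carrier_mat n m"
    and W: "W \<in> carrier_mat N N" and Wdiag: "\<forall>i<N. W $$ (i,i) = 0"
    and delta: "\<forall>i<N. \<delta> i \<in> {0, 1}"
    and h: "0 < h"
    and v_dim: "\<forall>k<N. v k \<in> carrier_vec N"
    and v_indep: "\<forall>c :: nat \<Rightarrow> complex.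
        finsum_vec TYPE(complex) N (\<lambda>k. c k \<cdot>\<^sub>v v k) {..<N} = 0\<^sub>v N \<longrightarrow> (\<forall>k<N. c k = 0)"
    and v_eig: "\<forall>k<N. row_mult (v k) (cmat W) = lam k \<cdot>\<^sub>v v k"
    and ctrb_W: "ctrb_pair (cmat W) (cmat (mat N N (\<lambda>(i,j). if i = j then \<delta> i else 0)))"
    and ctrb_E: "\<forall>k<N. ctrb_pair
        (cmat (exp_mat (h \<cdot>\<^sub>m A)) + lam k \<cdot>\<^sub>m cmat (int_exp_mat A h * (H * C)))
        (cmat (int_exp_mat A h * B))"
    and cond3: "\<forall>(K :: nat set) (\<theta> :: complex) (\<xi> :: nat \<Rightarrow> complex vec).
        K \<subseteq> {..<N} \<and> 1 < card K \<and>
        (\<forall>k\<in>K. eigenvalue (cmat (exp_mat (h \<cdot>\<^sub>m A)) + lam k \<cdot>\<^sub>m cmat (int_exp_mat A h * (H * C))) \<theta>) \<and>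
        (\<forall>k\<in>K. \<xi> k \<in> left_eigenspace \<theta>
                   (cmat (exp_mat (h \<cdot>\<^sub>m A)) + lam k \<cdot>\<^sub>m cmat (int_exp_mat A h * (H * C)))) \<and>
        (\<exists>k\<in>K. \<xi> k \<noteq> 0\<^sub>v n)
        \<longrightarrow> row_mult (finsum_vec TYPE(complex) (N * n) (\<lambda>k. kron_vec (v k) (\<xi> k)) K)
              (kron (cmat (mat N N (\<lambda>(i,j). if i = j then \<delta> i else 0))) (cmat (int_exp_mat A h * B)))
            \<noteq> 0\<^sub>v (N * p)"
  shows "ds_controllable
     (kron (1\<^sub>m N) (exp_mat (h \<cdot>\<^sub>m A)) + kron W (int_exp_mat A h * (H * C)))
     (kron (mat N N (\<lambda>(i,j). if i = j then \<delta> i else 0)) (int_exp_mat A h * B))"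
proof -
  define e where "e = exp_mat (h \<cdot>\<^sub>m A)"
  define Hh where "Hh = int_exp_mat A h * (H * C)"
  define Bh where "Bh = int_exp_mat A h * B"
  define D :: "real mat" where "D = mat N N (\<lambda>(i,j). if i = j then \<delta> i else 0)"
  have e: "e \<in> carrier_mat n n" unfolding e_def exp_mat_def using A by simp
  have IE: "int_exp_mat A h \<in> carrier_mat n n" unfolding int_exp_mat_def using A by simp
  have Hh: "Hh \<in> carrier_mat n n" unfolding Hh_def using IE H C by (metis mult_carrier_mat)
  have Bh: "Bh \<in> carrier_mat n p" unfolding Bh_def using IE B by (metis mult_carrier_mat)
  have D: "D \<in> carrier_mat N N" unfolding D_def by simp
  define \<Phi> where "\<Phi> = kron (1\<^sub>m N) e + kron W Hh"
  define \<Psi> where "\<Psi> = kron D Bh"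
  have K1: "kron (1\<^sub>m N) e \<in> carrier_mat (N*n) (N*n)" using kron_carrier[OF one_carrier_mat e] .
  have K2: "kron W Hh \<in> carrier_mat (N*n) (N*n)" using kron_carrier[OF W Hh] .
  have \<Phi>: "\<Phi> \<in> carrier_mat (N*n) (N*n)" unfolding \<Phi>_def using K1 K2 by simp
  have \<Psi>: "\<Psi> \<in> carrier_mat (N*n) (N*p)" unfolding \<Psi>_def using kron_carrier[OF D Bh] .
  define Ec where "Ec = cmat e"
  define Hc where "Hc = cmat Hh"
  define Bc where "Bc = cmat Bh"
  define Dc where "Dc = cmat D"
  define Wc where "Wc = cmat W"
  have Ec: "Ec \<in> carrier_mat n n" unfolding Ec_def using e by simp
  have Hc: "Hc \<in> carrier_mat n n" unfolding Hc_def using Hh by simp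
  have Bc: "Bc \<in> carrier_mat n p" unfolding Bc_def using Bh by simp
  have Dc: "Dc \<in> carrier_mat N N" unfolding Dc_def using D by simp
  have Wc: "Wc \<in> carrier_mat N N" unfolding Wc_def using W by simp
  define Ek where "Ek k = Ec + lam k \<cdot>\<^sub>m Hc" for k
  have Ek: "Ek k \<in> carrier_mat n n" for k unfolding Ek_def using Ec Hc by simp
  have "ds_controllable \<Phi> \<Psi>"
  proof (rule pbh_ctrb[OF \<Phi> \<Psi>])
    fix z :: "complex vec" and \<theta> :: complex
    assume z: "z \<in> carrier_vec (N*n)" and eq1: "(cmat \<Phi>)\<^sup>T *\<^sub>v z = \<theta> \<cdot>\<^sub>v z"
      and eq2: "(cmat \<Psi>)\<^sup>T *\<^sub>v z = 0\<^sub>v (N*p)"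
    define zz where "zz i a = z $ (i*n+a)" for i a
    have cPhi: "cmat \<Phi> = kron (1\<^sub>m N) Ec + kron Wc Hc"
    proof -
      have "cmat \<Phi> = cmat (kron (1\<^sub>m N) e) + cmat (kron W Hh)"
        unfolding \<Phi>_def by (rule cmat_add[OF K1 K2])
      moreover have "cmat (1\<^sub>m N) = (1\<^sub>m N :: complex mat)" by (rule eq_matI) auto
      ultimately show ?thesis unfolding Ec_def Wc_def Hc_def cmat_kron by simp
    qed
    have KC1: "kron (1\<^sub>m N) Ec \<in> carrier_mat (N*n) (N*n)" using kron_carrier[OF one_carrier_mat Ec] .
    have KC2: "kron Wc Hc \<in> carrier_mat (N*n) (N*n)" using kron_carrier[OF Wc Hc] .
    have S: "(cmat \<Phi>)\<^sup>T *\<^sub>v z = (kron (1\<^sub>m N) Ec)\<^sup>T *\<^sub>v z + (kron Wc Hc)\<^sup>T *\<^sub>v z"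
      unfolding cPhi using transpose_add[OF KC1 KC2] KC1 KC2 z
      by (simp add: add_mult_distrib_mat_vec[of _ "N*n" "N*n"])
    have EQ1: "(\<Sum>a<n. Ec $$ (a,b) * zz j a) + (\<Sum>i<N. Wc $$ (i,j) * (\<Sum>a<n. Hc $$ (a,b) * zz i a))
        = \<theta> * zz j b" if j: "j < N" and b: "b < n" for j b
    proof -
      have jb: "j*n+b < N*n" by (rule blk_lt[OF j b])
      have "((cmat \<Phi>)\<^sup>T *\<^sub>v z) $ (j*n+b) = \<theta> * zz j b"
        using eq1 jb z unfolding zz_def by simp
      moreover have "((cmat \<Phi>)\<^sup>T *\<^sub>v z) $ (j*n+b)
          = ((kron (1\<^sub>m N) Ec)\<^sup>T *\<^sub>v z) $ (j*n+b) + ((kron Wc Hc)\<^sup>T *\<^sub>v z) $ (j*n+b)"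
        unfolding S by (rule index_add_vec(1)) (use jb KC2 in simp)
      moreover have "((kron (1\<^sub>m N) Ec)\<^sup>T *\<^sub>v z) $ (j*n+b)
          = (\<Sum>i<N. (1\<^sub>m N) $$ (i,j) * (\<Sum>a<n. Ec $$ (a,b) * zz i a))"
        unfolding zz_def by (rule kron_T_mult[OF one_carrier_mat Ec z j b])
      moreover have "(\<Sum>i<N. (1\<^sub>m N) $$ (i,j) * (\<Sum>a<n. Ec $$ (a,b) * zz i a))
          = (\<Sum>a<n. Ec $$ (a,b) * zz j a)"
      proof -
        have "(\<Sum>i<N. (1\<^sub>m N) $$ (i,j) * (\<Sum>a<n. Ec $$ (a,b) * zz i a))
            = (\<Sum>i<N. if i = j then (\<Sum>a<n. Ec $$ (a,b) * zz i a) else 0)"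
          by (rule sum.cong) (use j in auto)
        also have "\<dots> = (\<Sum>a<n. Ec $$ (a,b) * zz j a)" using j by simp
        finally show ?thesis .
      qed
      moreover have "((kron Wc Hc)\<^sup>T *\<^sub>v z) $ (j*n+b)
          = (\<Sum>i<N. Wc $$ (i,j) * (\<Sum>a<n. Hc $$ (a,b) * zz i a))"
        unfolding zz_def by (rule kron_T_mult[OF Wc Hc z j b])
      ultimately show ?thesis by simp
    qed
    have cPsi: "cmat \<Psi> = kron Dc Bc" unfolding \<Psi>_def Dc_def Bc_def by (rule cmat_kron)
    have EQ2: "Dc $$ (j,j) * (\<Sum>a<n. Bc $$ (a,b) * zz j a) = 0" if j: "j < N" and b: "b < p" for j b
    proof -
      have jb: "j*p+b < N*p" by (rule blk_lt[OF j b])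
      have "((kron Dc Bc)\<^sup>T *\<^sub>v z) $ (j*p+b) = 0" using eq2 jb unfolding cPsi by simp
      moreover have "((kron Dc Bc)\<^sup>T *\<^sub>v z) $ (j*p+b) = (\<Sum>i<N. Dc $$ (i,j) * (\<Sum>a<n. Bc $$ (a,b) * zz i a))"
        unfolding zz_def by (rule kron_T_mult[OF Dc Bc z j b])
      moreover have "(\<Sum>i<N. Dc $$ (i,j) * (\<Sum>a<n. Bc $$ (a,b) * zz i a))
          = (\<Sum>i<N. if i = j then Dc $$ (j,j) * (\<Sum>a<n. Bc $$ (a,b) * zz j a) else 0)"
        by (rule sum.cong) (use j in \<open>auto simp: Dc_def D_def\<close>)
      moreover have "\<dots> = Dc $$ (j,j) * (\<Sum>a<n. Bc $$ (a,b) * zz j a)" using j by simp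
      ultimately show ?thesis by simp
    qed
    define V :: "complex mat" where "V = mat N N (\<lambda>(k,i). v k $ i)"
    have V: "V \<in> carrier_mat N N" unfolding V_def by simp
    have VT: "V\<^sup>T \<in> carrier_mat N N" using V by simp
    have dV: "det V \<noteq> 0"
    proof
      assume "det V = 0"
      hence "det V\<^sup>T = 0" using det_transpose[OF V] by simp
      then obtain c where c: "c \<in> carrier_vec N" "c \<noteq> 0\<^sub>v N" "V\<^sup>T *\<^sub>v c = 0\<^sub>v N"
        using det_0_iff_vec_prod_zero[OF VT] by blast
      have "finsum_vec TYPE(complex) N (\<lambda>k. (c $ k) \<cdot>\<^sub>v v k) {..<N} = 0\<^sub>v N"
      proof (rule eq_vecI)
        fix i assume "i < dim_vec (0\<^sub>v N)"
        hence i: "i < N" by simp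
        have "finsum_vec TYPE(complex) N (\<lambda>k. (c $ k) \<cdot>\<^sub>v v k) {..<N} $ i = (\<Sum>k<N. ((c $ k) \<cdot>\<^sub>v v k) $ i)"
          by (rule index_finsum_vec) (use i v_dim in auto)
        also have "\<dots> = (\<Sum>k<N. v k $ i * c $ k)"
          by (rule sum.cong) (use i v_dim in auto)
        also have "\<dots> = (V\<^sup>T *\<^sub>v c) $ i"
          using i c(1) V unfolding V_def by (simp add: scalar_prod_def lessThan_atLeast0)
        also have "\<dots> = 0" using c(3) i by simp
        finally show "finsum_vec TYPE(complex) N (\<lambda>k. (c $ k) \<cdot>\<^sub>v v k) {..<N} $ i = 0\<^sub>v N $ i"
          using i by simp
      next
        show "dim_vec (finsum_vec TYPE(complex) N (\<lambda>k. (c $ k) \<cdot>\<^sub>v v k) {..<N}) = dim_vec (0\<^sub>v N)"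
          using finsum_vec_closed[of "\<lambda>k. (c $ k) \<cdot>\<^sub>v v k" "{..<N}" N] v_dim by auto
      qed
      hence "\<forall>k<N. c $ k = 0" using v_indep by blast
      hence "c = 0\<^sub>v N" using c(1) by (intro eq_vecI) auto
      thus False using c(2) by simp
    qed
    define Vi where "Vi = (1 / det V) \<cdot>\<^sub>m adj_mat V"
    have AV: "adj_mat V \<in> carrier_mat N N" by (rule adj_mat(1)[OF V])
    have Vi: "Vi \<in> carrier_mat N N" unfolding Vi_def using AV by simp
    have ViV: "Vi * V = 1\<^sub>m N"
    proof -
      have "Vi * V = (1 / det V) \<cdot>\<^sub>m (adj_mat V * V)"
        unfolding Vi_def by (rule mult_smult_assoc_mat[OF AV V])
      also have "\<dots> = (1 / det V) \<cdot>\<^sub>m (det V \<cdot>\<^sub>m 1\<^sub>m N)" using adj_mat(3)[OF V] by simp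
      also have "\<dots> = 1\<^sub>m N" using dV by (intro eq_matI) auto
      finally show ?thesis .
    qed
    have VVi: "V * Vi = 1\<^sub>m N"
    proof -
      have "V * Vi = (1 / det V) \<cdot>\<^sub>m (V * adj_mat V)"
        unfolding Vi_def by (rule mult_smult_distrib[OF V AV])
      also have "\<dots> = (1 / det V) \<cdot>\<^sub>m (det V \<cdot>\<^sub>m 1\<^sub>m N)" using adj_mat(2)[OF V] by simp
      also have "\<dots> = 1\<^sub>m N" using dV by (intro eq_matI) auto
      finally show ?thesis .
    qed
    define \<Lambda> :: "complex mat" where "\<Lambda> = mat N N (\<lambda>(i,j). if i = j then lam i else 0)"
    have \<Lambda>: "\<Lambda> \<in> carrier_mat N N" unfolding \<Lambda>_def by simp
    have rowV: "row V k = v k" if k: "k < N" for k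
      using k v_dim unfolding V_def by (intro eq_vecI) auto
    have VW: "V * Wc = \<Lambda> * V"
    proof (rule eq_matI)
      fix k j assume "k < dim_row (\<Lambda> * V)" "j < dim_col (\<Lambda> * V)"
      hence k: "k < N" and j: "j < N" using \<Lambda> V by auto
      have "(V * Wc) $$ (k,j) = v k \<bullet> col Wc j" using k j V Wc rowV[OF k] by simp
      also have "\<dots> = row_mult (v k) Wc $ j" unfolding row_mult_def using j Wc by simp
      also have "\<dots> = lam k * v k $ j"
      proof -
        have "v k \<in> carrier_vec N" using v_dim k by simp
        thus ?thesis using v_eig k j unfolding Wc_def by simp
      qed
      also have "\<dots> = (\<Lambda> * V) $$ (k,j)"
      proof -
        have "(\<Lambda> * V) $$ (k,j) = (\<Sum>i<N. \<Lambda> $$ (k,i) * V $$ (i,j))"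
          using k j \<Lambda> V by (simp add: scalar_prod_def lessThan_atLeast0)
        also have "\<dots> = (\<Sum>i<N. if i = k then lam k * v k $ j else 0)"
          by (rule sum.cong) (use k j in \<open>auto simp: \<Lambda>_def V_def\<close>)
        also have "\<dots> = lam k * v k $ j" using k by simp
        finally show ?thesis by simp
      qed
      finally show "(V * Wc) $$ (k,j) = (\<Lambda> * V) $$ (k,j)" .
    qed (use V Wc \<Lambda> in auto)
    have WVi: "Wc * Vi = Vi * \<Lambda>"
    proof -
      have "Wc * Vi = ((Vi * V) * Wc) * Vi" using ViV Wc by simp
      also have "\<dots> = (Vi * (V * Wc)) * Vi" using Vi V Wc by simp
      also have "\<dots> = (Vi * (\<Lambda> * V)) * Vi" using VW by simp
      also have "\<dots> = (Vi * \<Lambda>) * (V * Vi)"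
      proof -
        have c1: "\<Lambda> * V \<in> carrier_mat N N" using \<Lambda> V by (rule mult_carrier_mat)
        have c2: "V * Vi \<in> carrier_mat N N" using V Vi by (rule mult_carrier_mat)
        have "Vi * (\<Lambda> * V) * Vi = Vi * ((\<Lambda> * V) * Vi)" by (rule assoc_mult_mat[OF Vi c1 Vi])
        also have "(\<Lambda> * V) * Vi = \<Lambda> * (V * Vi)" by (rule assoc_mult_mat[OF \<Lambda> V Vi])
        also have "Vi * (\<Lambda> * (V * Vi)) = (Vi * \<Lambda>) * (V * Vi)" by (rule assoc_mult_mat[OF Vi \<Lambda> c2, symmetric])
        finally show ?thesis .
      qed
      also have "\<dots> = Vi * \<Lambda>" using VVi Vi \<Lambda> by simp
      finally show ?thesis .
    qed
    have WVi_ent: "(\<Sum>j<N. Wc $$ (i,j) * Vi $$ (j,k)) = Vi $$ (i,k) * lam k" if i: "i < N" and k: "k < N" for i k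
    proof -
      have "(\<Sum>j<N. Wc $$ (i,j) * Vi $$ (j,k)) = (Wc * Vi) $$ (i,k)"
        using i k Wc Vi by (simp add: scalar_prod_def lessThan_atLeast0)
      also have "\<dots> = (Vi * \<Lambda>) $$ (i,k)" using WVi by simp
      also have "\<dots> = (\<Sum>j<N. Vi $$ (i,j) * \<Lambda> $$ (j,k))"
        using i k Vi \<Lambda> by (simp add: scalar_prod_def lessThan_atLeast0)
      also have "\<dots> = (\<Sum>j<N. if j = k then Vi $$ (i,k) * lam k else 0)"
        by (rule sum.cong) (use k in \<open>auto simp: \<Lambda>_def\<close>)
      also have "\<dots> = Vi $$ (i,k) * lam k" using k by simp
      finally show ?thesis .
    qed
    have ViV_ent: "(\<Sum>k<N. Vi $$ (j,k) * v k $ i) = (if j = i then 1 else 0)" if i: "i < N" and j: "j < N" for i j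
    proof -
      have "(\<Sum>k<N. Vi $$ (j,k) * v k $ i) = (Vi * V) $$ (j,i)"
        using i j Vi V unfolding V_def by (simp add: scalar_prod_def lessThan_atLeast0)
      also have "\<dots> = (if j = i then 1 else 0)" using ViV i j by simp
      finally show ?thesis .
    qed
    define \<xi> where "\<xi> k = vec n (\<lambda>a. \<Sum>j<N. Vi $$ (j,k) * zz j a)" for k
    have \<xi>c: "\<xi> k \<in> carrier_vec n" for k unfolding \<xi>_def by simp
    have R: "zz i a = (\<Sum>k<N. v k $ i * \<xi> k $ a)" if i: "i < N" and a: "a < n" for i a
    proof -
      have "(\<Sum>k<N. v k $ i * \<xi> k $ a) = (\<Sum>k<N. \<Sum>j<N. Vi $$ (j,k) * v k $ i * zz j a)"
        using a unfolding \<xi>_def by (simp add: sum_distrib_left mult_ac)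
      also have "\<dots> = (\<Sum>j<N. \<Sum>k<N. Vi $$ (j,k) * v k $ i * zz j a)" by (rule sum.swap)
      also have "\<dots> = (\<Sum>j<N. (\<Sum>k<N. Vi $$ (j,k) * v k $ i) * zz j a)"
        by (simp add: sum_distrib_right)
      also have "\<dots> = (\<Sum>j<N. (if j = i then zz j a else 0))"
        by (rule sum.cong) (use i ViV_ent in auto)
      also have "\<dots> = zz i a" using i by simp
      finally show ?thesis by simp
    qed
    have Eeq: "row_mult (\<xi> k) (Ek k) = \<theta> \<cdot>\<^sub>v \<xi> k" if k: "k < N" for k
    proof (rule eq_vecI)
      fix b assume "b < dim_vec (\<theta> \<cdot>\<^sub>v \<xi> k)"
      hence b: "b < n" by (simp add: \<xi>_def)
      define T1 where "T1 j = (\<Sum>a<n. Ec $$ (a,b) * zz j a)" for j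
      define T2 where "T2 i = (\<Sum>a<n. Hc $$ (a,b) * zz i a)" for i
      have "row_mult (\<xi> k) (Ek k) $ b = (\<Sum>a<n. \<xi> k $ a * Ek k $$ (a,b))"
        using row_mult_index[of b "Ek k" "\<xi> k"] Ek[of k] \<xi>c[of k] b by simp
      also have "\<dots> = (\<Sum>a<n. \<xi> k $ a * Ec $$ (a,b)) + lam k * (\<Sum>a<n. \<xi> k $ a * Hc $$ (a,b))"
        using b Ec Hc unfolding Ek_def by (simp add: algebra_simps sum.distrib sum_distrib_left)
      also have "(\<Sum>a<n. \<xi> k $ a * Ec $$ (a,b)) = (\<Sum>j<N. Vi $$ (j,k) * T1 j)"
      proof -
        have "(\<Sum>a<n. \<xi> k $ a * Ec $$ (a,b)) = (\<Sum>a<n. \<Sum>j<N. Vi $$ (j,k) * (Ec $$ (a,b) * zz j a))"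
          unfolding \<xi>_def by (simp add: sum_distrib_right sum_distrib_left mult_ac)
        also have "\<dots> = (\<Sum>j<N. \<Sum>a<n. Vi $$ (j,k) * (Ec $$ (a,b) * zz j a))" by (rule sum.swap)
        finally show ?thesis unfolding T1_def by (simp add: sum_distrib_left)
      qed
      also have "(\<Sum>a<n. \<xi> k $ a * Hc $$ (a,b)) = (\<Sum>i<N. Vi $$ (i,k) * T2 i)"
      proof -
        have "(\<Sum>a<n. \<xi> k $ a * Hc $$ (a,b)) = (\<Sum>a<n. \<Sum>j<N. Vi $$ (j,k) * (Hc $$ (a,b) * zz j a))"
          unfolding \<xi>_def by (simp add: sum_distrib_right sum_distrib_left mult_ac)
        also have "\<dots> = (\<Sum>j<N. \<Sum>a<n. Vi $$ (j,k) * (Hc $$ (a,b) * zz j a))" by (rule sum.swap)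
        finally show ?thesis unfolding T2_def by (simp add: sum_distrib_left)
      qed
      finally have L: "row_mult (\<xi> k) (Ek k) $ b
          = (\<Sum>j<N. Vi $$ (j,k) * T1 j) + lam k * (\<Sum>i<N. Vi $$ (i,k) * T2 i)" .
      have "(\<theta> \<cdot>\<^sub>v \<xi> k) $ b = (\<Sum>j<N. Vi $$ (j,k) * (\<theta> * zz j b))"
        using b unfolding \<xi>_def by (simp add: sum_distrib_left mult_ac)
      also have "\<dots> = (\<Sum>j<N. Vi $$ (j,k) * (T1 j + (\<Sum>i<N. Wc $$ (i,j) * T2 i)))"
        by (rule sum.cong) (use EQ1 b in \<open>auto simp: T1_def T2_def\<close>)
      also have "\<dots> = (\<Sum>j<N. Vi $$ (j,k) * T1 j) + (\<Sum>i<N. (\<Sum>j<N. Wc $$ (i,j) * Vi $$ (j,k)) * T2 i)"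
      proof -
        have "(\<Sum>j<N. Vi $$ (j,k) * (\<Sum>i<N. Wc $$ (i,j) * T2 i))
            = (\<Sum>j<N. \<Sum>i<N. Wc $$ (i,j) * Vi $$ (j,k) * T2 i)"
          by (simp add: sum_distrib_left mult_ac)
        also have "\<dots> = (\<Sum>i<N. \<Sum>j<N. Wc $$ (i,j) * Vi $$ (j,k) * T2 i)" by (rule sum.swap)
        also have "\<dots> = (\<Sum>i<N. (\<Sum>j<N. Wc $$ (i,j) * Vi $$ (j,k)) * T2 i)"
          by (simp add: sum_distrib_right)
        finally show ?thesis by (simp add: distrib_left sum.distrib)
      qed
      also have "(\<Sum>i<N. (\<Sum>j<N. Wc $$ (i,j) * Vi $$ (j,k)) * T2 i) = lam k * (\<Sum>i<N. Vi $$ (i,k) * T2 i)"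
        using WVi_ent k by (simp add: sum_distrib_left mult_ac)
      finally show "row_mult (\<xi> k) (Ek k) $ b = (\<theta> \<cdot>\<^sub>v \<xi> k) $ b" using L by simp
    qed (use Ek[of k] in \<open>simp add: row_mult_def \<xi>_def\<close>)
    define K where "K = {k \<in> {..<N}. \<xi> k \<noteq> 0\<^sub>v n}"
    have fK: "finite K" unfolding K_def by simp
    have KN: "K \<subseteq> {..<N}" unfolding K_def by auto
    have RK: "zz i a = (\<Sum>k\<in>K. v k $ i * \<xi> k $ a)" if i: "i < N" and a: "a < n" for i a
    proof -
      have "(\<Sum>k<N. v k $ i * \<xi> k $ a) = (\<Sum>k\<in>K. v k $ i * \<xi> k $ a)"
        by (rule sum.mono_neutral_right) (use a KN in \<open>auto simp: K_def\<close>)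
      thus ?thesis using R[OF i a] by simp
    qed
    have Kne: "\<xi> k \<noteq> 0\<^sub>v n" if "k \<in> K" for k using that unfolding K_def by auto
    have cK: "card K = 0 \<or> card K = 1 \<or> 1 < card K" by arith
    moreover have "z = 0\<^sub>v (N*n)" if c0: "card K = 0"
    proof -
      have "K = {}" using c0 fK by simp
      hence "\<And>i a. i < N \<Longrightarrow> a < n \<Longrightarrow> zz i a = 0" using RK by simp
      thus ?thesis using z by (intro vec_eq_blocks[of _ N n]) (auto simp: zz_def blk_lt)
    qed
    moreover have "z = 0\<^sub>v (N*n)" if c2: "1 < card K"
    proof (rule ccontr)
      have P: "K \<subseteq> {..<N} \<and> 1 < card K \<and> (\<forall>k\<in>K. eigenvalue (Ek k) \<theta>) \<and>
          (\<forall>k\<in>K. \<xi> k \<in> left_eigenspace \<theta> (Ek k)) \<and> (\<exists>k\<in>K. \<xi> k \<noteq> 0\<^sub>v n)"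
      proof (intro conjI ballI)
        show "K \<subseteq> {..<N}" by (rule KN)
        show "1 < card K" by (rule c2)
        fix k assume k: "k \<in> K"
        hence kN: "k < N" using KN by auto
        show "eigenvalue (Ek k) \<theta>" by (rule left_eig_eigenvalue[OF Ek \<xi>c Kne[OF k] Eeq[OF kN]])
        show "\<xi> k \<in> left_eigenspace \<theta> (Ek k)"
          unfolding left_eigenspace_def using Ek[of k] \<xi>c[of k] Eeq[OF kN] by simp
      next
        from c2 have "K \<noteq> {}" by auto
        then obtain k where "k \<in> K" by blast
        thus "\<exists>k\<in>K. \<xi> k \<noteq> 0\<^sub>v n" using Kne by blast
      qed
      have ne: "row_mult (finsum_vec TYPE(complex) (N * n) (\<lambda>k. kron_vec (v k) (\<xi> k)) K) (kron Dc Bc) \<noteq> 0\<^sub>v (N * p)"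
        using cond3[rule_format, OF P[unfolded Ek_def Ec_def Hc_def e_def Hh_def]]
        unfolding Dc_def Bc_def Bh_def D_def .
      have kvc: "kron_vec (v k) (\<xi> k) \<in> carrier_vec (N*n)" if k: "k \<in> K" for k
      proof -
        have "k < N" using k KN by blast
        hence "v k \<in> carrier_vec N" using v_dim by simp
        hence "dim_vec (v k) = N" by simp
        moreover have "dim_vec (\<xi> k) = n" using \<xi>c[of k] by simp
        ultimately show ?thesis unfolding carrier_vec_def by simp
      qed
      have FS: "finsum_vec TYPE(complex) (N * n) (\<lambda>k. kron_vec (v k) (\<xi> k)) K = z"
      proof (rule vec_eq_blocks[of _ N n])
        show "finsum_vec TYPE(complex) (N * n) (\<lambda>k. kron_vec (v k) (\<xi> k)) K \<in> carrier_vec (N * n)"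
          using finsum_vec_closed[of "\<lambda>k. kron_vec (v k) (\<xi> k)" K "N*n"] kvc by auto
        show "z \<in> carrier_vec (N * n)" by (rule z)
        fix i a assume i: "i < N" and a: "a < n"
        have ia: "i*n+a < N*n" by (rule blk_lt[OF i a])
        have "finsum_vec TYPE(complex) (N * n) (\<lambda>k. kron_vec (v k) (\<xi> k)) K $ (i*n+a)
            = (\<Sum>k\<in>K. kron_vec (v k) (\<xi> k) $ (i*n+a))"
          by (rule index_finsum_vec[OF fK ia]) (use kvc in auto)
        also have "\<dots> = (\<Sum>k\<in>K. v k $ i * \<xi> k $ a)"
        proof (rule sum.cong[OF refl])
          fix k assume k: "k \<in> K"
          have dv: "dim_vec (v k) = N" using k KN v_dim by auto
          have dx: "dim_vec (\<xi> k) = n" using \<xi>c[of k] by simp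
          show "kron_vec (v k) (\<xi> k) $ (i*n+a) = v k $ i * \<xi> k $ a"
            using kron_vec_index[of "i*n+a" "v k" "\<xi> k"] ia a dv dx by simp
        qed
        also have "\<dots> = z $ (i*n+a)" using RK[OF i a] unfolding zz_def by simp
        finally show "finsum_vec TYPE(complex) (N * n) (\<lambda>k. kron_vec (v k) (\<xi> k)) K $ (i*n+a) = z $ (i*n+a)" .
      qed
      have KDB: "kron Dc Bc \<in> carrier_mat (N*n) (N*p)" using kron_carrier[OF Dc Bc] .
      have "row_mult z (kron Dc Bc) = (kron Dc Bc)\<^sup>T *\<^sub>v z"
        by (rule row_mult_T) (use z KDB in simp)
      also have "\<dots> = 0\<^sub>v (N*p)" using eq2 unfolding cPsi .
      finally show False using ne FS by simp
    qed
    moreover have "z = 0\<^sub>v (N*n)" if c1: "card K = 1"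
    proof (rule ccontr)
      obtain k where Kk: "K = {k}" using card_1_singletonE[OF c1] by blast
      have kN: "k < N" using Kk KN by auto
      have xk: "\<xi> k \<noteq> 0\<^sub>v n" using Kne Kk by auto
      have Z1: "zz i a = v k $ i * \<xi> k $ a" if "i < N" "a < n" for i a using RK[OF that] Kk by simp
      have ctE: "ctrb_pair (Ek k) Bc"
        using ctrb_E[rule_format, OF kN] unfolding Ek_def Ec_def Hc_def e_def Hh_def Bc_def Bh_def .
      have xB: "row_mult (\<xi> k) Bc \<noteq> 0\<^sub>v p" by (rule ctrb_left[OF ctE Ek Bc \<xi>c xk Eeq[OF kN]])
      obtain b where b: "b < p" "row_mult (\<xi> k) Bc $ b \<noteq> 0"
      proof -
        have "\<exists>b<p. row_mult (\<xi> k) Bc $ b \<noteq> 0"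
        proof (rule ccontr)
          assume "\<not> ?thesis"
          hence "row_mult (\<xi> k) Bc = 0\<^sub>v p" using Bc by (intro eq_vecI) (auto simp: row_mult_def)
          thus False using xB by simp
        qed
        thus ?thesis using that by blast
      qed
      have vkc: "v k \<in> carrier_vec N" using v_dim kN by simp
      have vk0: "v k \<noteq> 0\<^sub>v N"
      proof
        assume vz: "v k = 0\<^sub>v N"
        define c :: "nat \<Rightarrow> complex" where "c k' = (if k' = k then 1 else 0)" for k'
        have "finsum_vec TYPE(complex) N (\<lambda>k'. c k' \<cdot>\<^sub>v v k') {..<N} = 0\<^sub>v N"
        proof (rule eq_vecI)
          fix i assume "i < dim_vec (0\<^sub>v N)"
          hence i: "i < N" by simp
          have "finsum_vec TYPE(complex) N (\<lambda>k'. c k' \<cdot>\<^sub>v v k') {..<N} $ i = (\<Sum>k'<N. (c k' \<cdot>\<^sub>v v k') $ i)"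
            by (rule index_finsum_vec) (use i v_dim in auto)
          also have "\<dots> = (\<Sum>k'<N. if k' = k then v k $ i else 0)"
            by (rule sum.cong) (use i v_dim in \<open>auto simp: c_def\<close>)
          also have "\<dots> = 0" using kN vz i by simp
          finally show "finsum_vec TYPE(complex) N (\<lambda>k'. c k' \<cdot>\<^sub>v v k') {..<N} $ i = 0\<^sub>v N $ i"
            using i by simp
        next
          show "dim_vec (finsum_vec TYPE(complex) N (\<lambda>k'. c k' \<cdot>\<^sub>v v k') {..<N}) = dim_vec (0\<^sub>v N)"
            using finsum_vec_closed[of "\<lambda>k'. c k' \<cdot>\<^sub>v v k'" "{..<N}" N] v_dim by auto
        qed
        from v_indep[rule_format, OF this] kN have "c k = 0" by simp
        thus False unfolding c_def by simp
      qed
      have ctW: "ctrb_pair Wc Dc" using ctrb_W unfolding Wc_def Dc_def D_def .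
      have vW: "row_mult (v k) Wc = lam k \<cdot>\<^sub>v v k" using v_eig kN unfolding Wc_def by simp
      have vD: "row_mult (v k) Dc \<noteq> 0\<^sub>v N" by (rule ctrb_left[OF ctW Wc Dc vkc vk0 vW])
      obtain j where j: "j < N" "row_mult (v k) Dc $ j \<noteq> 0"
      proof -
        have "\<exists>j<N. row_mult (v k) Dc $ j \<noteq> 0"
        proof (rule ccontr)
          assume "\<not> ?thesis"
          hence "row_mult (v k) Dc = 0\<^sub>v N" using Dc by (intro eq_vecI) (auto simp: row_mult_def)
          thus False using vD by simp
        qed
        thus ?thesis using that by blast
      qed
      have vDj: "row_mult (v k) Dc $ j = v k $ j * Dc $$ (j,j)"
      proof -
        have "row_mult (v k) Dc $ j = (\<Sum>t<N. v k $ t * Dc $$ (t,j))"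
          using row_mult_index[of j Dc "v k"] j Dc vkc by simp
        also have "\<dots> = (\<Sum>t<N. if t = j then v k $ j * Dc $$ (j,j) else 0)"
          by (rule sum.cong) (use j in \<open>auto simp: Dc_def D_def\<close>)
        also have "\<dots> = v k $ j * Dc $$ (j,j)" using j by simp
        finally show ?thesis .
      qed
      have xBb: "row_mult (\<xi> k) Bc $ b = (\<Sum>a<n. \<xi> k $ a * Bc $$ (a,b))"
        using row_mult_index[of b Bc "\<xi> k"] b Bc \<xi>c[of k] by simp
      have "Dc $$ (j,j) * (\<Sum>a<n. Bc $$ (a,b) * zz j a) = 0" by (rule EQ2[OF j(1) b(1)])
      moreover have "(\<Sum>a<n. Bc $$ (a,b) * zz j a) = v k $ j * (\<Sum>a<n. \<xi> k $ a * Bc $$ (a,b))"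
        using Z1[OF j(1)] by (simp add: sum_distrib_left mult_ac)
      ultimately have "(v k $ j * Dc $$ (j,j)) * (\<Sum>a<n. \<xi> k $ a * Bc $$ (a,b)) = 0"
        by (metis mult.assoc mult.commute)
      thus False using j(2) b(2) vDj xBb by simp
    qed
    ultimately show "z = 0\<^sub>v (N*n)" by blast
  qed
  thus ?thesis unfolding \<Phi>_def \<Psi>_def e_def Hh_def Bh_def D_def .
qed

end
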